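(* Let $\beta>0$, $\gamma>0$, $T$ a positive integer, and $(\eta_t)_{t\ge1}$ positive step sizes. Then: (i) If $\eta_t=C\le2/(\beta+\gamma)$ for all $t$, then $\sum_{t=1}^T\eta_t\prod_{j=t+1}^T(1-\eta_j\gamma)=\frac{1-(1-C\gamma)^T}{\gamma}$. (ii) If $\eta_t=C/t\le2/(\beta+\gamma)$ for $t\ge1+\lceil\beta/\gamma\rceil$ for some $C\ge2/\gamma$, and $\eta_t=C'/t\le2/(\beta+\gamma)$ for $t\le\lceil\beta/\gamma\rceil$ for some $C'<2/(\gamma+\beta)$, then $\sum_{t=1}^T\eta_t\prod_{j=t+1}^T\left(1-\frac{\eta_j\gamma}{2}\right)\le C\log\left(e^2\lceil\beta/\gamma\rceil\right)$. (iii) If $\eta_t\le C/t<2/\beta$ for all $t$, then $\sum_{t=1}^T\eta_t\prod_{j=t+1}^T(1+\beta\eta_j)^2\le C e^{2C\beta}T^{2C\beta}\min\left\{1+\frac1{2C\beta},\ \log(eT)\right\}$. *)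

theory Defs
  imports Complex_Main
begin

end

theory Submission
  imports Defs
begin

lemma part1:
  fixes C \<gamma> :: real and T :: nat
  assumes "C * \<gamma> \<noteq> 0"
  shows "(\<Sum>t=1..T. C * (\<Prod>j=t+1..T. 1 - C * \<gamma>)) = (1 - (1 - C * \<gamma>) ^ T) / \<gamma>"
proof -
  have "(\<Sum>t=1..T. C * (\<Prod>j=t+1..T. 1 - C * \<gamma>)) = (\<Sum>t=1..T. C * (1 - C*\<gamma>)^(T-t))"
    by (rule sum.cong) (auto simp: prod_constant)
  also have "\<dots> = (\<Sum>k<T. C * (1 - C*\<gamma>)^(T - Suc k))"
    by (simp add: sum.atLeast1_atMost_eq)
  also have "\<dots> = (\<Sum>k<T. C * (1 - C*\<gamma>)^k)"
    by (rule sum.nat_diff_reindex)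
  also have "\<dots> = C * ((1 - (1 - C*\<gamma>)^T) / (1 - (1 - C*\<gamma>)))"
    using assms by (simp add: sum_distrib_left[symmetric] sum_gp_strict)
  also have "\<dots> = (1 - (1 - C * \<gamma>) ^ T) / \<gamma>"
    using assms by (auto simp: field_simps)
  finally show ?thesis .
qed

lemma harm_tail:
  assumes "1 \<le> t" "t \<le> n"
  shows "(\<Sum>j=t+1..n. 1 / real j) \<le> ln (real n) - ln (real t)"
  using assms(2)
proof (induction n rule: dec_induct)
  case base then show ?case by simp
next
  case (step n)
  have n1: "real n \<ge> 1" using step assms by simp
  have "ln (real n / real (Suc n)) \<le> real n / real (Suc n) - 1"
    by (rule ln_le_minus_one) (use n1 in simp)
  also have "\<dots> = - 1 / real (Suc n)" by (simp add: field_simps)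
  finally have "1 / real (Suc n) \<le> ln (real (Suc n)) - ln (real n)"
    using n1 by (simp add: ln_div)
  moreover have "(\<Sum>j=t+1..Suc n. 1 / real j) = (\<Sum>j=t+1..n. 1 / real j) + 1 / real (Suc n)"
    using step by (simp add: sum.cl_ivl_Suc)
  ultimately show ?case using step by linarith
qed

lemma harm_le:
  assumes "1 \<le> n"
  shows "(\<Sum>j=1..n. 1 / real j) \<le> 1 + ln (real n)"
proof -
  have "(\<Sum>j=1..n. 1 / real j) = 1 + (\<Sum>j=1+1..n. 1 / real j)"
    using assms by (simp add: sum.atLeast_Suc_atMost)
  then show ?thesis using harm_tail[of 1 n] assms by simp
qed

lemma prod_ratio:
  assumes "1 \<le> t" "t \<le> n"
  shows "(\<Prod>j=t+1..n. (real j - 1) / real j) = real t / real n"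
  using assms(2)
proof (induction n rule: dec_induct)
  case base then show ?case using assms by simp
next
  case (step n)
  have "(\<Prod>j=t+1..Suc n. (real j - 1) / real j) = (\<Prod>j=t+1..n. (real j - 1) / real j) * (real (Suc n) - 1) / real (Suc n)"
    using step by (simp add: prod.cl_ivl_Suc)
  then show ?case using step assms by (simp add: field_simps)
qed

lemma pow_step:
  fixes a :: real and t :: nat
  assumes "a > 0" "t \<ge> 2"
  shows "real t powr (-1 - a) \<le> (real (t-1) powr (-a) - real t powr (-a)) / a"
proof -
  have t0: "real t > 0" "real (t-1) > 0" using assms by auto
  have x: "1 / real t < 1" using assms by simp
  have x2: "1 - 1 / real t > 0" using x by simp
  have "- ln (1 - 1/real t) \<ge> 1 / real t"
    using ln_le_minus_one[of "1 - 1/real t"] x by simp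
  have eq: "real (t-1) = real t * (1 - 1/real t)" using assms by (simp add: field_simps of_nat_diff)
  have "(1 - 1/real t) powr (-a) = exp (a * (- ln (1 - 1/real t)))"
    using x2 assms by (auto simp: powr_def)
  also have "\<dots> \<ge> exp (a / real t)"
    using \<open>- ln (1 - 1/real t) \<ge> 1 / real t\<close> assms
    using mult_left_mono[OF \<open>- ln (1 - 1/real t) \<ge> 1 / real t\<close>, of a] by simp
  finally have b: "(1 - 1/real t) powr (-a) \<ge> 1 + a / real t"
    using exp_ge_add_one_self[of "a / real t"] by linarith
  have "real (t-1) powr (-a) = real t powr (-a) * (1 - 1/real t) powr (-a)"
    using eq t0 x by (subst eq) (simp add: powr_mult)
  also have "\<dots> \<ge> real t powr (-a) * (1 + a / real t)"
    using b by (intro mult_left_mono) auto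
  finally have "real (t-1) powr (-a) \<ge> real t powr (-a) + a * (real t powr (-a) / real t)"
    by (simp add: algebra_simps)
  moreover have "real t powr (-a) / real t = real t powr (-1 - a)"
    using t0 by (simp add: powr_diff powr_minus divide_simps)
  ultimately show ?thesis using assms by (simp add: field_simps)
qed

lemma powsum:
  fixes a :: real
  assumes "a > 0" "1 \<le> T"
  shows "(\<Sum>t=1..T. real t powr (-1-a)) \<le> 1 + 1/a"
proof -
  have "(\<Sum>t=1..T. real t powr (-1-a)) \<le> 1 + (1 - real T powr (-a))/a"
    using assms(2)
  proof (induction T rule: dec_induct)
    case base then show ?case by simp
  next
    case (step n)
    have "(\<Sum>t=1..Suc n. real t powr (-1-a)) = (\<Sum>t=1..n. real t powr (-1-a)) + real (Suc n) powr (-1-a)"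
      using step by (simp add: sum.cl_ivl_Suc)
    moreover have "real (Suc n) powr (-1-a) \<le> (real n powr (-a) - real (Suc n) powr (-a)) / a"
      using pow_step[of a "Suc n"] assms step by simp
    ultimately show ?case using step assms by (simp add: field_simps)
  qed
  moreover have "real T powr (-a) \<ge> 0" by simp
  ultimately show ?thesis using assms by (smt (verit) divide_right_mono)
qed

lemma powsum2:
  fixes a :: real
  assumes "a > 0"
  shows "(\<Sum>t=1..T. real t powr (-1-a)) \<le> (\<Sum>t=1..T. 1 / real t)"
proof (rule sum_mono)
  fix t assume "t \<in> {1..T}"
  then have "real t \<ge> 1" by simp
  then have "real t powr (-1-a) \<le> real t powr (-1)"
    using assms by (intro powr_mono) auto
  then show "real t powr (-1-a) \<le> 1 / real t" using \<open>real t \<ge> 1\<close> by (simp add: powr_minus divide_simps)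
qed

lemma part3:
  fixes \<beta> C :: real and T :: nat and \<eta> :: "nat \<Rightarrow> real"
  assumes "\<beta> > 0" "T \<ge> 1" "\<forall>t\<ge>1. \<eta> t > 0" "\<forall>t\<ge>1. \<eta> t \<le> C / real t"
  shows "(\<Sum>t=1..T. \<eta> t * (\<Prod>j=t+1..T. (1 + \<beta> * \<eta> j)^2))
           \<le> C * exp (2 * C * \<beta>) * real T powr (2 * C * \<beta>)
              * min (1 + 1 / (2 * C * \<beta>)) (ln (exp 1 * real T))"
proof -
  define a where "a = 2 * C * \<beta>"
  have C: "C > 0" using assms(3,4)[rule_format, of 1] by simp
  have a: "a > 0" using C assms(1) by (simp add: a_def mult_ac)
  have T0: "real T > 0" using assms by simp
  have termb: "\<eta> t * (\<Prod>j=t+1..T. (1 + \<beta> * \<eta> j)^2) \<le> C * real T powr a * real t powr (-1-a)"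
    if t: "t \<in> {1..T}" for t
  proof -
    have t0: "real t > 0" using t by simp
    have "(\<Prod>j=t+1..T. (1 + \<beta> * \<eta> j)^2) \<le> (\<Prod>j=t+1..T. exp (a * (1 / real j)))"
    proof (rule prod_mono)
      fix j assume j: "j \<in> {t+1..T}"
      then have j1: "j \<ge> 1" using t by simp
      have e0: "\<eta> j > 0" "\<eta> j \<le> C / real j" using assms(3,4) j1 by auto
      have "(1 + \<beta> * \<eta> j)^2 \<le> exp (\<beta> * \<eta> j) ^ 2"
        using e0 assms(1) by (intro power_mono exp_ge_add_one_self) auto
      also have "\<dots> = exp (2 * \<beta> * \<eta> j)" by (simp add: exp_double[symmetric] power2_eq_square exp_add[symmetric])
      also have "\<dots> \<le> exp (a * (1 / real j))"
        using mult_left_mono[OF e0(2), of "2*\<beta>"] assms(1) by (simp add: a_def mult_ac)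
      finally show "0 \<le> (1 + \<beta> * \<eta> j)^2 \<and> (1 + \<beta> * \<eta> j)^2 \<le> exp (a * (1 / real j))" by simp
    qed
    also have "\<dots> = exp (a * (\<Sum>j=t+1..T. 1 / real j))"
      by (simp add: exp_sum sum_distrib_left)
    also have "\<dots> \<le> exp (a * (ln (real T) - ln (real t)))"
      using harm_tail[of t T] t a by (simp add: mult_left_mono)
    also have "\<dots> = real T powr a / real t powr a"
      using t0 T0 by (simp add: powr_def exp_diff algebra_simps)
    finally have P: "(\<Prod>j=t+1..T. (1 + \<beta> * \<eta> j)^2) \<le> real T powr a / real t powr a" .
    have "\<eta> t * (\<Prod>j=t+1..T. (1 + \<beta> * \<eta> j)^2) \<le> (C / real t) * (real T powr a / real t powr a)"
      using assms(3,4) t P C by (intro mult_mono) (auto intro: prod_nonneg)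
    also have "\<dots> = C * real T powr a * real t powr (-1-a)"
      using t0 by (simp add: powr_diff powr_minus divide_simps)
    finally show ?thesis .
  qed
  define S where "S = (\<Sum>t=1..T. real t powr (-1-a))"
  have "(\<Sum>t=1..T. \<eta> t * (\<Prod>j=t+1..T. (1 + \<beta> * \<eta> j)^2)) \<le> (\<Sum>t=1..T. C * real T powr a * real t powr (-1-a))"
    using termb by (rule sum_mono)
  also have "\<dots> = C * real T powr a * S" by (simp add: S_def sum_distrib_left)
  finally have L: "(\<Sum>t=1..T. \<eta> t * (\<Prod>j=t+1..T. (1 + \<beta> * \<eta> j)^2)) \<le> C * real T powr a * S" .
  have S1: "S \<le> 1 + 1/a" using powsum[OF a assms(2)] by (simp add: S_def)
  have S2: "S \<le> ln (exp 1 * real T)"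
    using powsum2[OF a, of T] harm_le[OF assms(2)] T0 by (simp add: S_def ln_mult)
  have Sm: "S \<le> min (1 + 1/a) (ln (exp 1 * real T))" using S1 S2 by simp
  have m0: "min (1 + 1/a) (ln (exp 1 * real T)) \<ge> 0"
    using a T0 assms(2) by (simp add: ln_mult)
  have "C * real T powr a * S \<le> C * real T powr a * min (1 + 1/a) (ln (exp 1 * real T))"
    using Sm C by (intro mult_left_mono) auto
  also have "\<dots> \<le> C * exp a * real T powr a * min (1 + 1/a) (ln (exp 1 * real T))"
  proof -
    have "1 \<le> exp a" using a by simp
    then have "C * real T powr a * min (1 + 1/a) (ln (exp 1 * real T)) * 1 \<le> C * real T powr a * min (1 + 1/a) (ln (exp 1 * real T)) * exp a"
      using C m0 by (intro mult_left_mono) auto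
    then show ?thesis by (simp add: algebra_simps)
  qed
  finally show ?thesis using L by (simp add: a_def)
qed

lemma part2:
  fixes \<beta> \<gamma> C C' :: real and T :: nat and \<eta> :: "nat \<Rightarrow> real"
  assumes "\<beta> > 0" "\<gamma> > 0" "T \<ge> 1" "\<forall>t\<ge>1. \<eta> t > 0"
    and hC: "C \<ge> 2 / \<gamma>" and hC': "C' < 2 / (\<gamma> + \<beta>)"
    and h1: "\<forall>t. t \<ge> 1 + nat \<lceil>\<beta> / \<gamma>\<rceil> \<longrightarrow> \<eta> t = C / real t \<and> C / real t \<le> 2 / (\<beta> + \<gamma>)"
    and h2: "\<forall>t. 1 \<le> t \<and> t \<le> nat \<lceil>\<beta> / \<gamma>\<rceil> \<longrightarrow> \<eta> t = C' / real t \<and> C' / real t \<le> 2 / (\<beta> + \<gamma>)"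
  shows "(\<Sum>t=1..T. \<eta> t * (\<Prod>j=t+1..T. 1 - \<eta> j * \<gamma> / 2))
           \<le> C * ln (exp 2 * real_of_int \<lceil>\<beta> / \<gamma>\<rceil>)"
proof -
  define k where "k = nat \<lceil>\<beta> / \<gamma>\<rceil>"
  have kpos: "\<lceil>\<beta> / \<gamma>\<rceil> > 0" using assms(1,2) by simp
  then have k1: "k \<ge> 1" unfolding k_def by linarith
  have rk: "real_of_int \<lceil>\<beta> / \<gamma>\<rceil> = real k" using kpos by (simp add: k_def)
  have C0: "C > 0" using hC assms(2) by (smt (verit) divide_pos_pos)
  have CC': "C' \<le> C"
  proof -
    have "2 / (\<gamma> + \<beta>) \<le> 2 / \<gamma>" using assms(1,2) by (intro divide_left_mono) auto
    then show ?thesis using hC hC' by linarith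
  qed
  have etab: "\<eta> j \<le> 2 / (\<beta> + \<gamma>)" if "j \<ge> 1" for j
    using h1 h2 that unfolding k_def[symmetric] by (cases "j \<le> k") auto
  have fac01: "0 \<le> 1 - \<eta> j * \<gamma> / 2 \<and> 1 - \<eta> j * \<gamma> / 2 \<le> 1" if "j \<ge> 1" for j
  proof -
    have "\<eta> j * \<gamma> \<le> 2 / (\<beta> + \<gamma>) * \<gamma>" using etab[OF that] assms(2) by (intro mult_right_mono) auto
    also have "\<dots> \<le> 2" using assms(1,2) by (simp add: field_simps)
    finally show ?thesis using assms(2,4) that by (auto intro: mult_pos_pos)
  qed
  have prod01: "0 \<le> (\<Prod>j=t+1..T. 1 - \<eta> j * \<gamma> / 2) \<and> (\<Prod>j=t+1..T. 1 - \<eta> j * \<gamma> / 2) \<le> 1" for t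
    using fac01 by (auto intro!: prod_nonneg prod_le_1)
  define f where "f t = (if t \<le> k then C / real t else C / real T)" for t
  have termb: "\<eta> t * (\<Prod>j=t+1..T. 1 - \<eta> j * \<gamma> / 2) \<le> f t" if t: "t \<in> {1..T}" for t
  proof (cases "t \<le> k")
    case True
    have "\<eta> t * (\<Prod>j=t+1..T. 1 - \<eta> j * \<gamma> / 2) \<le> \<eta> t * 1"
      using prod01[of t] assms(4) t by (intro mult_left_mono) auto
    also have "\<dots> = C' / real t" using h2 True t unfolding k_def[symmetric] by auto
    also have "\<dots> \<le> C / real t" using CC' t by (simp add: divide_right_mono)
    finally show ?thesis using True by (simp add: f_def)
  next
    case False
    have "(\<Prod>j=t+1..T. 1 - \<eta> j * \<gamma> / 2) \<le> (\<Prod>j=t+1..T. (real j - 1) / real j)"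
    proof (rule prod_mono)
      fix j assume j: "j \<in> {t+1..T}"
      then have jk: "j \<ge> 1 + k" using False by simp
      then have ej: "\<eta> j = C / real j" using h1 unfolding k_def[symmetric] by auto
      have "C * \<gamma> \<ge> 2" using hC assms(2) by (simp add: field_simps)
      then have "\<eta> j * \<gamma> / 2 \<ge> 1 / real j" using ej jk by (simp add: field_simps)
      then have "1 - \<eta> j * \<gamma> / 2 \<le> (real j - 1) / real j" using jk by (simp add: field_simps)
      then show "0 \<le> 1 - \<eta> j * \<gamma> / 2 \<and> 1 - \<eta> j * \<gamma> / 2 \<le> (real j - 1) / real j"
        using fac01[of j] jk by simp
    qed
    also have "\<dots> = real t / real T" using prod_ratio[of t T] t by simp
    finally have P: "(\<Prod>j=t+1..T. 1 - \<eta> j * \<gamma> / 2) \<le> real t / real T" .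
    have et: "\<eta> t = C / real t" using h1 False unfolding k_def[symmetric] by auto
    have "\<eta> t * (\<Prod>j=t+1..T. 1 - \<eta> j * \<gamma> / 2) \<le> C / real t * (real t / real T)"
      unfolding et using P C0 t by (intro mult_left_mono) auto
    also have "\<dots> = C / real T" using t by simp
    finally show ?thesis using False by (simp add: f_def)
  qed
  have "(\<Sum>t=1..T. \<eta> t * (\<Prod>j=t+1..T. 1 - \<eta> j * \<gamma> / 2)) \<le> (\<Sum>t=1..T. f t)"
    using termb by (rule sum_mono)
  also have "\<dots> \<le> (\<Sum>t=1..T. (if t \<le> k then C / real t else 0)) + (\<Sum>t=1..T. C / real T)"
    unfolding sum.distrib[symmetric] f_def using C0 by (intro sum_mono) auto
  also have "(\<Sum>t=1..T. C / real T) = C" using assms(3) by simp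
  also have "(\<Sum>t=1..T. (if t \<le> k then C / real t else 0)) \<le> (\<Sum>t=1..k. C / real t)"
  proof -
    have "(\<Sum>t=1..T. (if t \<le> k then C / real t else 0)) = (\<Sum>t\<in>{1..T} \<inter> {t. t \<le> k}. C / real t)"
      by (simp add: sum.inter_filter[symmetric] Int_def)
    also have "\<dots> \<le> (\<Sum>t=1..k. C / real t)"
      using C0 by (intro sum_mono2) auto
    finally show ?thesis .
  qed
  also have "(\<Sum>t=1..k. C / real t) = C * (\<Sum>t=1..k. 1 / real t)" by (simp add: sum_distrib_left)
  also have "\<dots> \<le> C * (1 + ln (real k))" using harm_le[OF k1] C0 by (intro mult_left_mono) auto
  finally have "(\<Sum>t=1..T. \<eta> t * (\<Prod>j=t+1..T. 1 - \<eta> j * \<gamma> / 2)) \<le> C * (2 + ln (real k))"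
    by (simp add: algebra_simps)
  moreover have "ln (exp 2 * real k) = 2 + ln (real k)" using k1 by (simp add: ln_mult)
  ultimately show ?thesis using rk by simp
qed

theorem lemma16:
  fixes \<beta> \<gamma> :: real and T :: nat and \<eta> :: "nat \<Rightarrow> real"
  assumes "\<beta> > 0" and "\<gamma> > 0" and "T \<ge> 1"
    and "\<forall>t\<ge>1. \<eta> t > 0"
  shows
   "(\<forall>C::real. (\<forall>t\<ge>1. \<eta> t = C) \<and> C \<le> 2 / (\<beta> + \<gamma>) \<longrightarrow>
       (\<Sum>t=1..T. \<eta> t * (\<Prod>j=t+1..T. 1 - \<eta> j * \<gamma>)) = (1 - (1 - C * \<gamma>) ^ T) / \<gamma>)
  \<and> (\<forall>C C'::real.
       C \<ge> 2 / \<gamma> \<and> C' < 2 / (\<gamma> + \<beta>) \<and>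
       (\<forall>t. t \<ge> 1 + nat \<lceil>\<beta> / \<gamma>\<rceil> \<longrightarrow> \<eta> t = C / real t \<and> C / real t \<le> 2 / (\<beta> + \<gamma>)) \<and>
       (\<forall>t. 1 \<le> t \<and> t \<le> nat \<lceil>\<beta> / \<gamma>\<rceil> \<longrightarrow> \<eta> t = C' / real t \<and> C' / real t \<le> 2 / (\<beta> + \<gamma>))
     \<longrightarrow> (\<Sum>t=1..T. \<eta> t * (\<Prod>j=t+1..T. 1 - \<eta> j * \<gamma> / 2))
           \<le> C * ln (exp 2 * real_of_int \<lceil>\<beta> / \<gamma>\<rceil>))
  \<and> (\<forall>C::real.
       (\<forall>t\<ge>1. \<eta> t \<le> C / real t \<and> C / real t < 2 / \<beta>)
     \<longrightarrow> (\<Sum>t=1..T. \<eta> t * (\<Prod>j=t+1..T. (1 + \<beta> * \<eta> j)^2))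
           \<le> C * exp (2 * C * \<beta>) * real T powr (2 * C * \<beta>)
              * min (1 + 1 / (2 * C * \<beta>)) (ln (exp 1 * real T)))"
proof (intro conjI allI impI)
  fix C :: real
  assume h: "(\<forall>t\<ge>1. \<eta> t = C) \<and> C \<le> 2 / (\<beta> + \<gamma>)"
  then have C: "C > 0" using assms(4) by force
  have "(\<Sum>t=1..T. \<eta> t * (\<Prod>j=t+1..T. 1 - \<eta> j * \<gamma>)) = (\<Sum>t=1..T. C * (\<Prod>j=t+1..T. 1 - C * \<gamma>))"
    using h by (intro sum.cong refl arg_cong2[where f="(*)"] prod.cong) auto
  also have "\<dots> = (1 - (1 - C * \<gamma>) ^ T) / \<gamma>" using C assms(2) by (intro part1) auto
  finally show "(\<Sum>t=1..T. \<eta> t * (\<Prod>j=t+1..T. 1 - \<eta> j * \<gamma>)) = (1 - (1 - C * \<gamma>) ^ T) / \<gamma>" .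
next
  fix C C' :: real
  assume "C \<ge> 2 / \<gamma> \<and> C' < 2 / (\<gamma> + \<beta>) \<and>
       (\<forall>t. t \<ge> 1 + nat \<lceil>\<beta> / \<gamma>\<rceil> \<longrightarrow> \<eta> t = C / real t \<and> C / real t \<le> 2 / (\<beta> + \<gamma>)) \<and>
       (\<forall>t. 1 \<le> t \<and> t \<le> nat \<lceil>\<beta> / \<gamma>\<rceil> \<longrightarrow> \<eta> t = C' / real t \<and> C' / real t \<le> 2 / (\<beta> + \<gamma>))"
  then show "(\<Sum>t=1..T. \<eta> t * (\<Prod>j=t+1..T. 1 - \<eta> j * \<gamma> / 2))
           \<le> C * ln (exp 2 * real_of_int \<lceil>\<beta> / \<gamma>\<rceil>)"
    using part2[OF assms] by blast
next
  fix C :: real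
  assume "\<forall>t\<ge>1. \<eta> t \<le> C / real t \<and> C / real t < 2 / \<beta>"
  then show "(\<Sum>t=1..T. \<eta> t * (\<Prod>j=t+1..T. (1 + \<beta> * \<eta> j)^2))
           \<le> C * exp (2 * C * \<beta>) * real T powr (2 * C * \<beta>)
              * min (1 + 1 / (2 * C * \<beta>)) (ln (exp 1 * real T))"
    using part3[OF assms(1,3,4)] by blast
qed

end
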